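(* Let $n\ge 2$, $F_2=\langle a,b\rangle$ free, $T=[a,b]$, and $R=R_{\mathrm{Heis}_n}$ the kernel of $F_2\to H_n$, $a\mapsto\alpha$, $b\mapsto\beta$. Then for all integers $i,j\ge 0$ the elements $T^n$ and $T^{-n}[a^ib^j,T]$ lie in $R$, and in the abelianization $R^{ab}=R/[R,R]$ (written additively, with the $H_n$-action described in the context) one has $$T^n=a^n-(a^n)^{\beta}-\sum_{k=0}^{n-2}\sum_{i=0}^{n-2-k}[a,T]^{\tau^k\alpha^i},$$ $$T^{-n}=b^n-(b^n)^{\alpha}-\sum_{k=0}^{n-2}\sum_{j=0}^{n-2-k}[b,T^{-1}]^{\tau^{-k}\beta^j},$$ $$[a^ib^j,T]=[b,T]^{\alpha^i\sum_{\lambda=0}^{j-1}\beta^\lambda}+[a,T]^{\sum_{\lambda=0}^{i-1}\alpha^\lambda}.$$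
   Context: $H_n$ is the group of $3\times3$ upper unitriangular matrices over $\mathbb{Z}/n\mathbb{Z}$, generated by $\alpha$ (entry $1$ at position $(1,2)$) and $\beta$ (entry $1$ at position $(2,3)$); $\tau=[\alpha,\beta]$. Commutator $[x,y]=xyx^{-1}y^{-1}$. Elements of $R$ are identified with their classes in $R^{ab}$. Since $R$ is normal in $F_2$ with $F_2/R\cong H_n$, $H_n$ acts on $R^{ab}$: for $x\in R^{ab}$ and $g\in H_n$, $x^g$ is the class of $\tilde g x\tilde g^{-1}$ for any lift $\tilde g\in F_2$ of $g$ (so $x^{gh}=(x^h)^g$); this is extended $\mathbb{Z}$-linearly to $\mathbb{Z}[H_n]$ by $x^{\sum c_g g}=\sum c_g x^g$. Here $\alpha,\beta,\tau$ are the images of $a,b,T$. *)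

theory Defs
  imports "HOL-Algebra.Algebra"
begin

text \<open>A letter is (g, e): g = False means a, g = True means b; e = True means inverse.\<close>
type_synonym letter = "bool \<times> bool"

definition inv_letter :: "letter \<Rightarrow> letter" where
  "inv_letter l = (fst l, \<not> snd l)"

definition reduced :: "letter list \<Rightarrow> bool" where
  "reduced w \<longleftrightarrow> (\<forall>i. Suc i < length w \<longrightarrow> w ! Suc i \<noteq> inv_letter (w ! i))"

fun cancel1 :: "letter \<Rightarrow> letter list \<Rightarrow> letter list" where
  "cancel1 x [] = [x]"
| "cancel1 x (y # ys) = (if y = inv_letter x then ys else x # y # ys)"

definition F2 :: "letter list monoid" where
  "F2 = \<lparr> carrier = {w. reduced w}, monoid.mult = (\<lambda>u v. foldr cancel1 u v), one = [] \<rparr>"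

definition gen_a :: "letter list" where "gen_a = [(False, False)]"
definition gen_b :: "letter list" where "gen_b = [(True, False)]"

definition comm :: "letter list \<Rightarrow> letter list \<Rightarrow> letter list" where
  "comm x y = x \<otimes>\<^bsub>F2\<^esub> y \<otimes>\<^bsub>F2\<^esub> inv\<^bsub>F2\<^esub> x \<otimes>\<^bsub>F2\<^esub> inv\<^bsub>F2\<^esub> y"

definition gen_T :: "letter list" where "gen_T = comm gen_a gen_b"

abbreviation fpow :: "letter list \<Rightarrow> int \<Rightarrow> letter list" where
  "fpow x k \<equiv> x [^]\<^bsub>F2\<^esub> k"

text \<open>(x, y, z) represents the matrix [[1,x,z],[0,1,y],[0,0,1]] with entries in {0..<n}.\<close>
definition Heis :: "int \<Rightarrow> (int \<times> int \<times> int) monoid" where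
  "Heis n = \<lparr> carrier = {(x, y, z). x \<in> {0..<n} \<and> y \<in> {0..<n} \<and> z \<in> {0..<n}},
     monoid.mult = (\<lambda>(x, y, z) (x', y', z'). ((x + x') mod n, (y + y') mod n, (z + z' + x * y') mod n)),
     one = (0, 0, 0) \<rparr>"

definition letter_val :: "int \<Rightarrow> letter \<Rightarrow> int \<times> int \<times> int" where
  "letter_val n l = (if fst l then (0, (if snd l then -1 else 1) mod n, 0)
                     else ((if snd l then -1 else 1) mod n, 0, 0))"

definition hval :: "int \<Rightarrow> letter list \<Rightarrow> int \<times> int \<times> int" where
  "hval n w = foldr (\<lambda>l acc. letter_val n l \<otimes>\<^bsub>Heis n\<^esub> acc) w \<one>\<^bsub>Heis n\<^esub>"

definition Rel :: "int \<Rightarrow> letter list set" where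
  "Rel n = kernel F2 (Heis n) (hval n)"

definition Rab :: "int \<Rightarrow> letter list set monoid" where
  "Rab n = (F2\<lparr>carrier := Rel n\<rparr>) Mod (derived F2 (Rel n))"

definition cls :: "int \<Rightarrow> letter list \<Rightarrow> letter list set" where
  "cls n x = derived F2 (Rel n) #>\<^bsub>F2\<^esub> x"

text \<open>x^g for x in R and g a lift in F_2 of an element of H_n: class of g x g^{-1}\<close>
definition act :: "int \<Rightarrow> letter list \<Rightarrow> letter list \<Rightarrow> letter list set" where
  "act n g x = cls n (g \<otimes>\<^bsub>F2\<^esub> x \<otimes>\<^bsub>F2\<^esub> inv\<^bsub>F2\<^esub> g)"

definition rsum :: "int \<Rightarrow> letter list set list \<Rightarrow> letter list set" where
  "rsum n xs = foldr (\<lambda>x acc. x \<otimes>\<^bsub>Rab n\<^esub> acc) xs \<one>\<^bsub>Rab n\<^esub>"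

end

theory Submission
  imports Defs
begin

lemma inv_letter_inv[simp]: "inv_letter (inv_letter x) = x"
  by (simp add: inv_letter_def)

lemma reduced_Nil[simp]: "reduced []" by (simp add: reduced_def)
lemma reduced_single[simp]: "reduced [x]" by (simp add: reduced_def)
lemma reduced_Cons2[simp]: "reduced (x # y # ys) \<longleftrightarrow> y \<noteq> inv_letter x \<and> reduced (y # ys)"
proof
  assume r: "reduced (x # y # ys)"
  have "y \<noteq> inv_letter x" using r[unfolded reduced_def, rule_format, of 0] by simp
  moreover have "reduced (y # ys)" unfolding reduced_def
  proof (intro allI impI)
    fix i assume "Suc i < length (y # ys)"
    then show "(y # ys) ! Suc i \<noteq> inv_letter ((y # ys) ! i)"
      using r[unfolded reduced_def, rule_format, of "Suc i"] by simp
  qed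
  ultimately show "y \<noteq> inv_letter x \<and> reduced (y # ys)" by simp
next
  assume h: "y \<noteq> inv_letter x \<and> reduced (y # ys)"
  show "reduced (x # y # ys)" unfolding reduced_def
  proof (intro allI impI)
    fix i assume i: "Suc i < length (x # y # ys)"
    show "(x # y # ys) ! Suc i \<noteq> inv_letter ((x # y # ys) ! i)"
    proof (cases i)
      case 0 then show ?thesis using h by simp
    next
      case (Suc j) then show ?thesis using h i unfolding reduced_def by auto
    qed
  qed
qed

lemma reduced_tl: "reduced (x # xs) \<Longrightarrow> reduced xs"
  by (cases xs) auto

lemma cancel1_reduced: "reduced w \<Longrightarrow> reduced (cancel1 x w)"
  apply (cases w)
   apply simp
  subgoal for y ys by (auto dest: reduced_tl simp: inv_letter_def)
  done

lemma cancel1_inv: "reduced w \<Longrightarrow> cancel1 (inv_letter x) (cancel1 x w) = w"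
proof (cases w)
  case Nil then show ?thesis by simp
next
  case (Cons y ys)
  assume r: "reduced w"
  show ?thesis
  proof (cases "y = inv_letter x")
    case True
    then show ?thesis using r Cons by (cases ys) auto
  next
    case False
    then show ?thesis using Cons by simp
  qed
qed

lemma cancel1_inv': "reduced w \<Longrightarrow> cancel1 x (cancel1 (inv_letter x) w) = w"
  using cancel1_inv[of w "inv_letter x"] by simp

lemma foldr_reduced: "reduced w \<Longrightarrow> reduced (foldr cancel1 u w)"
  by (induction u) (auto intro: cancel1_reduced)

lemma foldr_cancel_cons: "reduced w \<Longrightarrow> foldr cancel1 (cancel1 x v) w = cancel1 x (foldr cancel1 v w)"
proof (cases v)
  case Nil then show ?thesis by simp
next
  case (Cons y ys)
  assume r: "reduced w"
  show ?thesis
  proof (cases "y = inv_letter x")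
    case True
    then show ?thesis using Cons cancel1_inv'[OF foldr_reduced[OF r], of x ys] by simp
  next
    case False then show ?thesis using Cons by simp
  qed
qed

lemma foldr_assoc: "reduced w \<Longrightarrow> foldr cancel1 (foldr cancel1 u v) w = foldr cancel1 u (foldr cancel1 v w)"
  by (induction u) (auto simp: foldr_cancel_cons foldr_reduced)

lemma foldr_Nil_right: "reduced u \<Longrightarrow> foldr cancel1 u [] = u"
proof (induction u)
  case Nil then show ?case by simp
next
  case (Cons l u)
  have ru: "reduced u" using Cons.prems by (rule reduced_tl)
  then show ?case using Cons by (cases u) auto
qed

lemma foldr_left_inv: "foldr cancel1 (rev (map inv_letter x)) x = []"
  by (induction x) auto

lemma (in group) inv_cancel_l[simp]: "x \<in> carrier G \<Longrightarrow> y \<in> carrier G \<Longrightarrow> inv x \<otimes> (x \<otimes> y) = y"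
  by (simp add: m_assoc[symmetric])
lemma (in group) inv_cancel_r[simp]: "x \<in> carrier G \<Longrightarrow> y \<in> carrier G \<Longrightarrow> x \<otimes> (inv x \<otimes> y) = y"
  by (simp add: m_assoc[symmetric])

lemma F2_carrier: "carrier F2 = {w. reduced w}" by (simp add: F2_def)
lemma F2_mult: "u \<otimes>\<^bsub>F2\<^esub> v = foldr cancel1 u v" by (simp add: F2_def)
lemma F2_one: "\<one>\<^bsub>F2\<^esub> = []" by (simp add: F2_def)

lemma group_F2: "group F2"
proof (rule groupI)
  fix x assume x: "x \<in> carrier F2"
  show "\<exists>y\<in>carrier F2. y \<otimes>\<^bsub>F2\<^esub> x = \<one>\<^bsub>F2\<^esub>"
  proof (intro bexI)
    show "foldr cancel1 (rev (map inv_letter x)) [] \<in> carrier F2"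
      by (simp add: foldr_reduced F2_carrier)
    show "foldr cancel1 (rev (map inv_letter x)) [] \<otimes>\<^bsub>F2\<^esub> x = \<one>\<^bsub>F2\<^esub>"
      using x by (simp add: foldr_assoc foldr_left_inv F2_carrier F2_mult F2_one)
  qed
qed (auto simp: foldr_reduced foldr_assoc foldr_Nil_right F2_carrier F2_mult F2_one)


lemma Heis_carrier: "carrier (Heis n) = {(x, y, z). x \<in> {0..<n} \<and> y \<in> {0..<n} \<and> z \<in> {0..<n}}"
  by (simp add: Heis_def)
lemma Heis_mult[simp]: "(x, y, z) \<otimes>\<^bsub>Heis n\<^esub> (x', y', z') = ((x + x') mod n, (y + y') mod n, (z + z' + x * y') mod n)"
  by (simp add: Heis_def)
lemma Heis_one: "\<one>\<^bsub>Heis n\<^esub> = (0, 0, 0)"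
  by (simp add: Heis_def)
lemma Heis_mem[simp]: "(x, y, z) \<in> carrier (Heis n) \<longleftrightarrow> 0 \<le> x \<and> x < n \<and> 0 \<le> y \<and> y < n \<and> 0 \<le> z \<and> z < n"
  by (auto simp: Heis_def)

lemma modh1: "((a mod n) + b + (c mod n) * d) mod n = (a + b + c * d) mod (n::int)"
proof -
  have "((a mod n) + b + (c mod n) * d) mod n = ((a mod n) + (b + (c mod n) * d)) mod n"
    by (simp add: add.assoc)
  also have "\<dots> = (a + (b + (c mod n) * d)) mod n" by (rule mod_add_left_eq)
  also have "\<dots> = (a + (b + (c mod n) * d) mod n) mod n" by (rule mod_add_right_eq[symmetric])
  also have "(b + (c mod n) * d) mod n = (b + c * d) mod n"
  proof -
    have "(b + (c mod n) * d) mod n = (b + ((c mod n) * d) mod n) mod n" by (rule mod_add_right_eq[symmetric])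
    also have "\<dots> = (b + (c * d) mod n) mod n" by (simp only: mod_mult_left_eq)
    also have "\<dots> = (b + c * d) mod n" by (rule mod_add_right_eq)
    finally show ?thesis .
  qed
  also have "(a + (b + c * d) mod n) mod n = (a + b + c * d) mod n" by (simp add: mod_add_right_eq add.assoc)
  finally show ?thesis .
qed

lemma modh2: "(a + b mod n + c * (d mod n)) mod n = (a + b + c * d) mod (n::int)"
proof -
  have "(a + b mod n + c * (d mod n)) mod n = (a + b mod n + (c * (d mod n)) mod n) mod n"
    by (rule mod_add_right_eq[symmetric])
  also have "\<dots> = (a + b mod n + (c * d) mod n) mod n" by (simp add: mod_mult_right_eq)
  also have "\<dots> = (a + b mod n + c * d) mod n" by (rule mod_add_right_eq)
  also have "\<dots> = (b mod n + (a + c * d)) mod n" by (simp add: algebra_simps)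
  also have "\<dots> = (b + (a + c * d)) mod n" by (rule mod_add_left_eq)
  also have "\<dots> = (a + b + c * d) mod n" by (simp add: algebra_simps)
  finally show ?thesis .
qed

lemma group_Heis: assumes n: "n > 0" shows "group (Heis n)"
proof (rule groupI)
  fix a b assume "a \<in> carrier (Heis n)" "b \<in> carrier (Heis n)"
  then show "a \<otimes>\<^bsub>Heis n\<^esub> b \<in> carrier (Heis n)" using n
    by (cases a; cases b) auto
next
  show "\<one>\<^bsub>Heis n\<^esub> \<in> carrier (Heis n)" using n by (simp add: Heis_one F2_one)
next
  fix a b c assume "a \<in> carrier (Heis n)" "b \<in> carrier (Heis n)" "c \<in> carrier (Heis n)"
  obtain x y z where a: "a = (x, y, z)" by (cases a) auto
  obtain x' y' z' where b: "b = (x', y', z')" by (cases b) auto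
  obtain x'' y'' z'' where c: "c = (x'', y'', z'')" by (cases c) auto
  have 1: "((x + x') mod n + x'') mod n = (x + (x' + x'') mod n) mod n"
    by (simp add: mod_simps add.assoc)
  have 2: "((y + y') mod n + y'') mod n = (y + (y' + y'') mod n) mod n"
    by (simp add: mod_simps add.assoc)
  have 3: "((z + z' + x * y') mod n + z'' + (x + x') mod n * y'') mod n
         = (z + (z' + z'' + x' * y'') mod n + x * ((y' + y'') mod n)) mod n"
    unfolding modh1 modh2 by (simp add: algebra_simps)
  show "a \<otimes>\<^bsub>Heis n\<^esub> b \<otimes>\<^bsub>Heis n\<^esub> c = a \<otimes>\<^bsub>Heis n\<^esub> (b \<otimes>\<^bsub>Heis n\<^esub> c)"
    using 1 2 3 by (simp add: a b c)
next
  fix a assume "a \<in> carrier (Heis n)"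
  then obtain x y z where a: "a = (x, y, z)" and r: "0 \<le> x" "x < n" "0 \<le> y" "y < n" "0 \<le> z" "z < n"
    by (cases a) auto
  show "\<one>\<^bsub>Heis n\<^esub> \<otimes>\<^bsub>Heis n\<^esub> a = a" using r by (simp add: a Heis_one)
  show "\<exists>b\<in>carrier (Heis n). b \<otimes>\<^bsub>Heis n\<^esub> a = \<one>\<^bsub>Heis n\<^esub>"
  proof (intro bexI)
    show "((- x) mod n, (- y) mod n, (x * y - z) mod n) \<otimes>\<^bsub>Heis n\<^esub> a = \<one>\<^bsub>Heis n\<^esub>"
      using modh1[of "x * y - z" n z "- x" y] by (simp add: a mod_add_left_eq Heis_one)
    show "((- x) mod n, (- y) mod n, (x * y - z) mod n) \<in> carrier (Heis n)"
      using n by simp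
  qed
qed

lemma letter_val_mem: "n > 0 \<Longrightarrow> letter_val n l \<in> carrier (Heis n)"
  by (simp add: letter_val_def)

lemma hval_Nil[simp]: "hval n [] = (0,0,0)" by (simp add: hval_def Heis_one)
lemma hval_Cons[simp]: "hval n (l # w) = letter_val n l \<otimes>\<^bsub>Heis n\<^esub> hval n w"
  by (simp add: hval_def)

lemma hval_mem: "n > 0 \<Longrightarrow> hval n w \<in> carrier (Heis n)"
proof (induction w)
  case Nil then show ?case by simp
next
  case (Cons l w)
  interpret group "Heis n" using group_Heis Cons by blast
  show ?case using Cons letter_val_mem by simp
qed

lemma letter_val_inv: "n > 0 \<Longrightarrow> letter_val n l \<otimes>\<^bsub>Heis n\<^esub> letter_val n (inv_letter l) = (0,0,0)"
  by (cases l) (auto simp: letter_val_def inv_letter_def mod_simps)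

lemma hval_cancel1: assumes n: "n > 0"
  shows "hval n (cancel1 l w) = letter_val n l \<otimes>\<^bsub>Heis n\<^esub> hval n w"
proof (cases w)
  case Nil then show ?thesis by simp
next
  case (Cons y ys)
  interpret group "Heis n" using group_Heis n by blast
  show ?thesis
  proof (cases "y = inv_letter l")
    case True
    have "letter_val n l \<otimes>\<^bsub>Heis n\<^esub> hval n w
        = (letter_val n l \<otimes>\<^bsub>Heis n\<^esub> letter_val n (inv_letter l)) \<otimes>\<^bsub>Heis n\<^esub> hval n ys"
      using Cons True by (simp add: m_assoc letter_val_mem hval_mem n)
    also have "\<dots> = hval n ys" using letter_val_inv[OF n] l_one[OF hval_mem[OF n, of ys]] by (simp add: Heis_one F2_one)
    finally show ?thesis using Cons True by simp
  next
    case False then show ?thesis using Cons by simp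
  qed
qed

lemma hval_hom: assumes n: "n > 0" shows "hval n \<in> hom F2 (Heis n)"
proof (rule homI)
  fix x assume "x \<in> carrier F2" show "hval n x \<in> carrier (Heis n)" using hval_mem n by blast
next
  interpret group "Heis n" using group_Heis n by blast
  fix x y assume "x \<in> carrier F2" "y \<in> carrier F2"
  show "hval n (x \<otimes>\<^bsub>F2\<^esub> y) = hval n x \<otimes>\<^bsub>Heis n\<^esub> hval n y"
  proof (simp add: F2_mult, induction x)
    case Nil then show ?case using l_one[OF hval_mem[OF n, of y]] by (simp add: Heis_one F2_one)
  next
    case (Cons l x)
    then show ?case by (simp add: hval_cancel1 n m_assoc letter_val_mem hval_mem)
  qed
qed

lemma group_hom_hval: "n > 0 \<Longrightarrow> group_hom F2 (Heis n) (hval n)"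
  by (simp add: group_hom_def group_hom_axioms_def group_F2 group_Heis hval_hom)

lemma Rel_normal: "n > 0 \<Longrightarrow> Rel n \<lhd> F2"
  unfolding Rel_def by (rule group_hom.normal_kernel[OF group_hom_hval])


locale L = fixes n :: int assumes n2: "n \<ge> 2"
begin

lemma npos: "n > 0" using n2 by simp

sublocale F: group F2 by (rule group_F2)

lemma RN: "Rel n \<lhd> F2" by (rule Rel_normal[OF npos])
lemma RS: "subgroup (Rel n) F2" by (rule normal_imp_subgroup[OF RN])
lemma R_car: "r \<in> Rel n \<Longrightarrow> r \<in> carrier F2" by (rule subgroup.mem_carrier[OF RS])

abbreviation "D \<equiv> derived F2 (Rel n)"
abbreviation "HR \<equiv> F2\<lparr>carrier := Rel n\<rparr>"

lemma DN: "D \<lhd> F2" by (rule F.derived_is_normal[OF RN])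
lemma DS: "subgroup D F2" by (rule normal_imp_subgroup[OF DN])
lemma DR: "D \<subseteq> Rel n" by (rule F.derived_incl[OF subset_refl RS])
lemma DH: "D \<lhd> HR" by (rule F.derived_subgroup_is_normal[OF RS])
lemma comm_in_D: "r \<in> Rel n \<Longrightarrow> s \<in> Rel n \<Longrightarrow> r \<otimes>\<^bsub>F2\<^esub> s \<otimes>\<^bsub>F2\<^esub> inv\<^bsub>F2\<^esub> r \<otimes>\<^bsub>F2\<^esub> inv\<^bsub>F2\<^esub> s \<in> D"
  unfolding derived_def by (rule generate.incl) blast

lemma Rab_group: "group (Rab n)"
  unfolding Rab_def by (rule normal.factorgroup_is_group[OF DH])

lemma rcos_H: "r_coset HR = r_coset F2" by (simp add: r_coset_def[abs_def])

lemma cls_mem: "r \<in> Rel n \<Longrightarrow> cls n r \<in> carrier (Rab n)"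
  by (auto simp: Rab_def cls_def FactGroup_def RCOSETS_def rcos_H)

lemma Rab_carrier: "Z \<in> carrier (Rab n) \<Longrightarrow> (\<exists>r. r \<in> Rel n \<and> Z = cls n r)"
  by (auto simp: Rab_def cls_def FactGroup_def RCOSETS_def rcos_H)

lemma cls_mult: "r \<in> Rel n \<Longrightarrow> s \<in> Rel n \<Longrightarrow> cls n r \<otimes>\<^bsub>Rab n\<^esub> cls n s = cls n (r \<otimes>\<^bsub>F2\<^esub> s)"
  using normal.rcos_sum[OF DH, of r s]
  by (simp add: Rab_def cls_def FactGroup_def rcos_H set_mult_def)

lemma cls_one: "cls n \<one>\<^bsub>F2\<^esub> = \<one>\<^bsub>Rab n\<^esub>"
  using F.coset_join2[OF F.one_closed DS subgroup.one_closed[OF DS]]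
  by (simp add: Rab_def cls_def)

lemma inv_R: "r \<in> Rel n \<Longrightarrow> inv\<^bsub>F2\<^esub> r \<in> Rel n" by (rule subgroup.m_inv_closed[OF RS])
lemma mult_R: "r \<in> Rel n \<Longrightarrow> s \<in> Rel n \<Longrightarrow> r \<otimes>\<^bsub>F2\<^esub> s \<in> Rel n" by (rule subgroup.m_closed[OF RS])
lemma one_R: "\<one>\<^bsub>F2\<^esub> \<in> Rel n" by (rule subgroup.one_closed[OF RS])
lemma conj_R: "g \<in> carrier F2 \<Longrightarrow> r \<in> Rel n \<Longrightarrow> g \<otimes>\<^bsub>F2\<^esub> r \<otimes>\<^bsub>F2\<^esub> inv\<^bsub>F2\<^esub> g \<in> Rel n"
  by (rule normal.inv_op_closed2[OF RN])

lemma cls_inv: "r \<in> Rel n \<Longrightarrow> inv\<^bsub>Rab n\<^esub> (cls n r) = cls n (inv\<^bsub>F2\<^esub> r)"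
proof -
  assume r: "r \<in> Rel n"
  have "cls n (inv\<^bsub>F2\<^esub> r) \<otimes>\<^bsub>Rab n\<^esub> cls n r = \<one>\<^bsub>Rab n\<^esub>"
    using r by (simp add: cls_mult inv_R R_car flip: cls_one)
  from group.inv_equality[OF Rab_group this cls_mem[OF r] cls_mem[OF inv_R[OF r]]]
  show ?thesis .
qed

lemma cls_eq: "x \<in> carrier F2 \<Longrightarrow> y \<in> carrier F2 \<Longrightarrow> x \<otimes>\<^bsub>F2\<^esub> inv\<^bsub>F2\<^esub> y \<in> D \<Longrightarrow> cls n x = cls n y"
proof -
  assume x: "x \<in> carrier F2" and y: "y \<in> carrier F2" and d: "x \<otimes>\<^bsub>F2\<^esub> inv\<^bsub>F2\<^esub> y \<in> D"
  have "x \<in> D #>\<^bsub>F2\<^esub> y" by (rule subgroup.rcos_module_rev[OF DS F.is_group y x d])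
  from F.repr_independence[OF this y DS] show ?thesis unfolding cls_def by simp
qed

lemma cls_eqD: "x \<in> carrier F2 \<Longrightarrow> y \<in> carrier F2 \<Longrightarrow> cls n x = cls n y \<Longrightarrow> x \<otimes>\<^bsub>F2\<^esub> inv\<^bsub>F2\<^esub> y \<in> D"
proof -
  assume x: "x \<in> carrier F2" and y: "y \<in> carrier F2" and e: "cls n x = cls n y"
  have "x \<in> D #>\<^bsub>F2\<^esub> y" using F.rcos_self[OF x DS] e unfolding cls_def by simp
  from subgroup.rcos_module_imp[OF DS F.is_group y this] show ?thesis .
qed

lemma Rab_comm: "comm_group (Rab n)"
proof (rule group.group_comm_groupI[OF Rab_group])
  fix U Y assume "U \<in> carrier (Rab n)" "Y \<in> carrier (Rab n)"
  then obtain r s where r: "r \<in> Rel n" "U = cls n r" and s: "s \<in> Rel n" "Y = cls n s"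
    using Rab_carrier by blast
  have rc: "r \<in> carrier F2" and sc: "s \<in> carrier F2" using r s R_car by auto
  have "cls n (r \<otimes>\<^bsub>F2\<^esub> s) = cls n (s \<otimes>\<^bsub>F2\<^esub> r)"
  proof (rule cls_eq)
    have "r \<otimes>\<^bsub>F2\<^esub> s \<otimes>\<^bsub>F2\<^esub> inv\<^bsub>F2\<^esub> (s \<otimes>\<^bsub>F2\<^esub> r) = r \<otimes>\<^bsub>F2\<^esub> s \<otimes>\<^bsub>F2\<^esub> inv\<^bsub>F2\<^esub> r \<otimes>\<^bsub>F2\<^esub> inv\<^bsub>F2\<^esub> s"
      using rc sc by (simp add: F.inv_mult_group F.m_assoc)
    then show "r \<otimes>\<^bsub>F2\<^esub> s \<otimes>\<^bsub>F2\<^esub> inv\<^bsub>F2\<^esub> (s \<otimes>\<^bsub>F2\<^esub> r) \<in> D"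
      using comm_in_D[OF r(1) s(1)] by simp
  qed (use rc sc in auto)
  then show "U \<otimes>\<^bsub>Rab n\<^esub> Y = Y \<otimes>\<^bsub>Rab n\<^esub> U" using r s by (simp add: cls_mult)
qed

end

sublocale L \<subseteq> M: comm_group "Rab n" by (rule Rab_comm)

context L begin

lemma act_mem: "g \<in> carrier F2 \<Longrightarrow> r \<in> Rel n \<Longrightarrow> act n g r \<in> carrier (Rab n)"
  by (simp add: act_def cls_mem conj_R)

lemma act_mult: "g \<in> carrier F2 \<Longrightarrow> r \<in> Rel n \<Longrightarrow> s \<in> Rel n \<Longrightarrow>
   act n g (r \<otimes>\<^bsub>F2\<^esub> s) = act n g r \<otimes>\<^bsub>Rab n\<^esub> act n g s"
proof -
  assume g: "g \<in> carrier F2" and r: "r \<in> Rel n" and s: "s \<in> Rel n"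
  have rc: "r \<in> carrier F2" and sc: "s \<in> carrier F2" using r s R_car by auto
  have "g \<otimes>\<^bsub>F2\<^esub> (r \<otimes>\<^bsub>F2\<^esub> s) \<otimes>\<^bsub>F2\<^esub> inv\<^bsub>F2\<^esub> g
      = (g \<otimes>\<^bsub>F2\<^esub> r \<otimes>\<^bsub>F2\<^esub> inv\<^bsub>F2\<^esub> g) \<otimes>\<^bsub>F2\<^esub> (g \<otimes>\<^bsub>F2\<^esub> s \<otimes>\<^bsub>F2\<^esub> inv\<^bsub>F2\<^esub> g)"
    using g rc sc by (simp add: F.m_assoc F.inv_solve_left)
  then show ?thesis using g r s by (simp add: act_def cls_mult conj_R)
qed

lemma act_inv: "g \<in> carrier F2 \<Longrightarrow> r \<in> Rel n \<Longrightarrow> act n g (inv\<^bsub>F2\<^esub> r) = inv\<^bsub>Rab n\<^esub> act n g r"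
proof -
  assume g: "g \<in> carrier F2" and r: "r \<in> Rel n"
  have rc: "r \<in> carrier F2" using r R_car by auto
  have "g \<otimes>\<^bsub>F2\<^esub> inv\<^bsub>F2\<^esub> r \<otimes>\<^bsub>F2\<^esub> inv\<^bsub>F2\<^esub> g = inv\<^bsub>F2\<^esub> (g \<otimes>\<^bsub>F2\<^esub> r \<otimes>\<^bsub>F2\<^esub> inv\<^bsub>F2\<^esub> g)"
    using g rc by (simp add: F.m_assoc F.inv_mult_group)
  then show ?thesis using g r by (simp add: act_def cls_inv conj_R)
qed

lemma act_comp: "g \<in> carrier F2 \<Longrightarrow> h \<in> carrier F2 \<Longrightarrow> r \<in> carrier F2 \<Longrightarrow>
   act n (g \<otimes>\<^bsub>F2\<^esub> h) r = act n g (h \<otimes>\<^bsub>F2\<^esub> r \<otimes>\<^bsub>F2\<^esub> inv\<^bsub>F2\<^esub> h)"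
  by (simp add: act_def F.m_assoc F.inv_mult_group)

lemma act_R: "g \<in> Rel n \<Longrightarrow> r \<in> Rel n \<Longrightarrow> act n g r = cls n r"
  unfolding act_def
proof (rule cls_eq)
  assume g: "g \<in> Rel n" and r: "r \<in> Rel n"
  have gc: "g \<in> carrier F2" and rc: "r \<in> carrier F2" using g r R_car by auto
  show "g \<otimes>\<^bsub>F2\<^esub> r \<otimes>\<^bsub>F2\<^esub> inv\<^bsub>F2\<^esub> g \<in> carrier F2" "r \<in> carrier F2" using gc rc by auto
  have "g \<otimes>\<^bsub>F2\<^esub> r \<otimes>\<^bsub>F2\<^esub> inv\<^bsub>F2\<^esub> g \<otimes>\<^bsub>F2\<^esub> inv\<^bsub>F2\<^esub> r
      = g \<otimes>\<^bsub>F2\<^esub> r \<otimes>\<^bsub>F2\<^esub> inv\<^bsub>F2\<^esub> g \<otimes>\<^bsub>F2\<^esub> inv\<^bsub>F2\<^esub> r" ..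
  then show "g \<otimes>\<^bsub>F2\<^esub> r \<otimes>\<^bsub>F2\<^esub> inv\<^bsub>F2\<^esub> g \<otimes>\<^bsub>F2\<^esub> inv\<^bsub>F2\<^esub> r \<in> D"
    using comm_in_D[OF g r] by simp
qed

lemma act_one: "r \<in> carrier F2 \<Longrightarrow> act n \<one>\<^bsub>F2\<^esub> r = cls n r"
  by (simp add: act_def)

lemma act_cls: "g \<in> carrier F2 \<Longrightarrow> r \<in> Rel n \<Longrightarrow> s \<in> Rel n \<Longrightarrow> cls n r = cls n s \<Longrightarrow> act n g r = act n g s"
proof -
  assume g: "g \<in> carrier F2" and r: "r \<in> Rel n" and s: "s \<in> Rel n" and e: "cls n r = cls n s"
  have rc: "r \<in> carrier F2" and sc: "s \<in> carrier F2" using r s R_car by auto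
  have d: "r \<otimes>\<^bsub>F2\<^esub> inv\<^bsub>F2\<^esub> s \<in> D" using cls_eqD[OF rc sc e] .
  have "g \<otimes>\<^bsub>F2\<^esub> r \<otimes>\<^bsub>F2\<^esub> inv\<^bsub>F2\<^esub> g \<otimes>\<^bsub>F2\<^esub> inv\<^bsub>F2\<^esub> (g \<otimes>\<^bsub>F2\<^esub> s \<otimes>\<^bsub>F2\<^esub> inv\<^bsub>F2\<^esub> g)
     = g \<otimes>\<^bsub>F2\<^esub> (r \<otimes>\<^bsub>F2\<^esub> inv\<^bsub>F2\<^esub> s) \<otimes>\<^bsub>F2\<^esub> inv\<^bsub>F2\<^esub> g"
    using g rc sc by (simp add: F.m_assoc F.inv_mult_group F.inv_solve_left)
  also have "\<dots> \<in> D" using normal.inv_op_closed2[OF DN g d] .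
  finally show ?thesis unfolding act_def using g rc sc by (intro cls_eq) auto
qed

definition actc :: "letter list \<Rightarrow> letter list set \<Rightarrow> letter list set" where
  "actc g U = act n g (SOME r. r \<in> Rel n \<and> U = cls n r)"

lemma actc_cls: "g \<in> carrier F2 \<Longrightarrow> r \<in> Rel n \<Longrightarrow> actc g (cls n r) = act n g r"
proof -
  assume g: "g \<in> carrier F2" and r: "r \<in> Rel n"
  define s where "s = (SOME s. s \<in> Rel n \<and> cls n r = cls n s)"
  have "s \<in> Rel n \<and> cls n r = cls n s" unfolding s_def by (rule someI[of _ r]) (use r in auto)
  then show ?thesis unfolding actc_def s_def[symmetric] using act_cls[OF g r] by auto
qed

lemma actc_mem: "g \<in> carrier F2 \<Longrightarrow> U \<in> carrier (Rab n) \<Longrightarrow> actc g U \<in> carrier (Rab n)"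
proof -
  assume g: "g \<in> carrier F2" and U: "U \<in> carrier (Rab n)"
  then obtain r where r: "r \<in> Rel n" "U = cls n r" using Rab_carrier by blast
  show ?thesis using r g by (simp add: actc_cls act_mem)
qed

lemma actc_mult: "g \<in> carrier F2 \<Longrightarrow> U \<in> carrier (Rab n) \<Longrightarrow> Y \<in> carrier (Rab n) \<Longrightarrow>
  actc g (U \<otimes>\<^bsub>Rab n\<^esub> Y) = actc g U \<otimes>\<^bsub>Rab n\<^esub> actc g Y"
proof -
  assume g: "g \<in> carrier F2" and U: "U \<in> carrier (Rab n)" and V: "Y \<in> carrier (Rab n)"
  obtain r where r: "r \<in> Rel n" "U = cls n r" using Rab_carrier U by blast
  obtain s where s: "s \<in> Rel n" "Y = cls n s" using Rab_carrier V by blast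
  show ?thesis using r s g by (simp add: actc_cls act_mult cls_mult mult_R)
qed

lemma actc_inv: "g \<in> carrier F2 \<Longrightarrow> U \<in> carrier (Rab n) \<Longrightarrow>
  actc g (inv\<^bsub>Rab n\<^esub> U) = inv\<^bsub>Rab n\<^esub> actc g U"
proof -
  assume g: "g \<in> carrier F2" and U: "U \<in> carrier (Rab n)"
  then obtain r where r: "r \<in> Rel n" "U = cls n r" using Rab_carrier by blast
  show ?thesis using r g by (simp add: actc_cls act_inv cls_inv inv_R)
qed

lemma actc_comp: "g \<in> carrier F2 \<Longrightarrow> h \<in> carrier F2 \<Longrightarrow> U \<in> carrier (Rab n) \<Longrightarrow>
  actc g (actc h U) = actc (g \<otimes>\<^bsub>F2\<^esub> h) U"
proof -
  assume g: "g \<in> carrier F2" and h: "h \<in> carrier F2" and U: "U \<in> carrier (Rab n)"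
  then obtain r where r: "r \<in> Rel n" "U = cls n r" using Rab_carrier by blast
  have "actc g (actc h U) = actc g (cls n (h \<otimes>\<^bsub>F2\<^esub> r \<otimes>\<^bsub>F2\<^esub> inv\<^bsub>F2\<^esub> h))"
    using r h by (simp add: actc_cls act_def)
  also have "\<dots> = act n g (h \<otimes>\<^bsub>F2\<^esub> r \<otimes>\<^bsub>F2\<^esub> inv\<^bsub>F2\<^esub> h)"
    by (rule actc_cls[OF g conj_R[OF h r(1)]])
  also have "\<dots> = act n (g \<otimes>\<^bsub>F2\<^esub> h) r" using act_comp[OF g h R_car[OF r(1)]] by simp
  also have "\<dots> = actc (g \<otimes>\<^bsub>F2\<^esub> h) U" using r g h by (simp add: actc_cls)
  finally show ?thesis .
qed

lemma actc_R: "g \<in> Rel n \<Longrightarrow> U \<in> carrier (Rab n) \<Longrightarrow> actc g U = U"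
proof -
  assume g: "g \<in> Rel n" and U: "U \<in> carrier (Rab n)"
  then obtain r where r: "r \<in> Rel n" "U = cls n r" using Rab_carrier by blast
  show ?thesis using r g by (simp add: actc_cls act_R R_car)
qed

lemma act_actc: "g \<in> carrier F2 \<Longrightarrow> r \<in> Rel n \<Longrightarrow> act n g r = actc g (cls n r)"
  by (simp add: actc_cls)

end

lemma lc_form: "[f k i. k \<leftarrow> xs, i \<leftarrow> ys k] = concat (map (\<lambda>k. map (f k) (ys k)) xs)"
  by (induction xs) auto

lemma (in group) conj_pow: "g \<in> carrier G \<Longrightarrow> x \<in> carrier G \<Longrightarrow>
  g \<otimes> x [^] (m::nat) \<otimes> inv g = (g \<otimes> x \<otimes> inv g) [^] m"
proof (induction m)
  case 0 then show ?case by simp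
next
  case (Suc m)
  have "g \<otimes> x [^] Suc m \<otimes> inv g = (g \<otimes> x [^] m \<otimes> inv g) \<otimes> (g \<otimes> x \<otimes> inv g)"
    using Suc.prems by (simp add: m_assoc)
  then show ?case using Suc by simp
qed

lemma (in comm_group) cancel3: "a \<in> carrier G \<Longrightarrow> b \<in> carrier G \<Longrightarrow> c \<in> carrier G \<Longrightarrow>
   c \<otimes> inv (inv a \<otimes> inv b \<otimes> c) \<otimes> inv b = a"
  by (simp add: inv_mult m_ac)

context L begin

lemma rsum_Nil[simp]: "rsum n [] = \<one>\<^bsub>Rab n\<^esub>" by (simp add: rsum_def)
lemma rsum_Cons[simp]: "rsum n (a # xs) = a \<otimes>\<^bsub>Rab n\<^esub> rsum n xs" by (simp add: rsum_def)

lemma rsum_mem: "set xs \<subseteq> carrier (Rab n) \<Longrightarrow> rsum n xs \<in> carrier (Rab n)"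
  by (induction xs) auto

lemma rsum_append: "set xs \<subseteq> carrier (Rab n) \<Longrightarrow> set ys \<subseteq> carrier (Rab n) \<Longrightarrow>
  rsum n (xs @ ys) = rsum n xs \<otimes>\<^bsub>Rab n\<^esub> rsum n ys"
  by (induction xs) (auto simp: rsum_mem M.m_assoc)

lemma actc_one: "g \<in> carrier F2 \<Longrightarrow> actc g \<one>\<^bsub>Rab n\<^esub> = \<one>\<^bsub>Rab n\<^esub>"
proof -
  assume g: "g \<in> carrier F2"
  have "actc g \<one>\<^bsub>Rab n\<^esub> = act n g \<one>\<^bsub>F2\<^esub>" using actc_cls[OF g one_R] by (simp add: cls_one)
  also have "\<dots> = \<one>\<^bsub>Rab n\<^esub>" using g by (simp add: act_def cls_one)
  finally show ?thesis .
qed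

lemma rsum_actc: "g \<in> carrier F2 \<Longrightarrow> set xs \<subseteq> carrier (Rab n) \<Longrightarrow>
  actc g (rsum n xs) = rsum n (map (actc g) xs)"
  by (induction xs) (auto simp: actc_one actc_mult rsum_mem)

lemma act_mult_g: "g \<in> carrier F2 \<Longrightarrow> h \<in> carrier F2 \<Longrightarrow> r \<in> Rel n \<Longrightarrow>
  act n (g \<otimes>\<^bsub>F2\<^esub> h) r = actc g (act n h r)"
  using act_comp[OF _ _ R_car] actc_cls conj_R by (simp add: act_def)

lemma comm_car: "x \<in> carrier F2 \<Longrightarrow> y \<in> carrier F2 \<Longrightarrow> comm x y \<in> carrier F2"
  by (simp add: comm_def)

lemma comm_inv_t: "g \<in> carrier F2 \<Longrightarrow> t \<in> carrier F2 \<Longrightarrow>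
  comm g (inv\<^bsub>F2\<^esub> t) = inv\<^bsub>F2\<^esub> t \<otimes>\<^bsub>F2\<^esub> inv\<^bsub>F2\<^esub> (comm g t) \<otimes>\<^bsub>F2\<^esub> t"
  by (simp add: comm_def F.m_assoc F.inv_mult_group)

lemma comm_inv_R: "g \<in> carrier F2 \<Longrightarrow> t \<in> carrier F2 \<Longrightarrow> comm g t \<in> Rel n \<Longrightarrow> comm g (inv\<^bsub>F2\<^esub> t) \<in> Rel n"
  using conj_R[of "inv\<^bsub>F2\<^esub> t" "inv\<^bsub>F2\<^esub> (comm g t)"] by (simp add: comm_inv_t inv_R)

lemma comm_pow_cls:
  assumes x: "x \<in> carrier F2" and t: "t \<in> carrier F2" and ct: "\<And>g. g \<in> carrier F2 \<Longrightarrow> comm g t \<in> Rel n"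
  shows "cls n (comm (x [^]\<^bsub>F2\<^esub> (m::nat)) t) = rsum n [act n (x [^]\<^bsub>F2\<^esub> i) (comm x t). i \<leftarrow> [0..<m]]"
proof (induction m)
  case 0
  have "comm (x [^]\<^bsub>F2\<^esub> (0::nat)) t = \<one>\<^bsub>F2\<^esub>" using t by (simp add: comm_def)
  then show ?case by (simp add: cls_one)
next
  case (Suc m)
  have e: "comm (x [^]\<^bsub>F2\<^esub> Suc m) t = (x [^]\<^bsub>F2\<^esub> m \<otimes>\<^bsub>F2\<^esub> comm x t \<otimes>\<^bsub>F2\<^esub> inv\<^bsub>F2\<^esub> (x [^]\<^bsub>F2\<^esub> m))
       \<otimes>\<^bsub>F2\<^esub> comm (x [^]\<^bsub>F2\<^esub> m) t"
    using x t by (simp add: comm_def F.m_assoc F.inv_mult_group)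
  have m1: "x [^]\<^bsub>F2\<^esub> m \<otimes>\<^bsub>F2\<^esub> comm x t \<otimes>\<^bsub>F2\<^esub> inv\<^bsub>F2\<^esub> (x [^]\<^bsub>F2\<^esub> m) \<in> Rel n"
    using conj_R ct x by simp
  have m2: "comm (x [^]\<^bsub>F2\<^esub> m) t \<in> Rel n" using ct x by simp
  have s: "set [act n (x [^]\<^bsub>F2\<^esub> i) (comm x t). i \<leftarrow> [0..<m]] \<subseteq> carrier (Rab n)"
    using act_mem ct x by auto
  have "cls n (comm (x [^]\<^bsub>F2\<^esub> Suc m) t) = act n (x [^]\<^bsub>F2\<^esub> m) (comm x t) \<otimes>\<^bsub>Rab n\<^esub> cls n (comm (x [^]\<^bsub>F2\<^esub> m) t)"
    unfolding e using m1 m2 by (simp add: cls_mult act_def)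
  also have "\<dots> = rsum n [act n (x [^]\<^bsub>F2\<^esub> i) (comm x t). i \<leftarrow> [0..<m]] \<otimes>\<^bsub>Rab n\<^esub> act n (x [^]\<^bsub>F2\<^esub> m) (comm x t)"
    using Suc act_mem[of "x [^]\<^bsub>F2\<^esub> m" "comm x t"] ct x s by (simp add: rsum_mem M.m_comm)
  also have "\<dots> = rsum n [act n (x [^]\<^bsub>F2\<^esub> i) (comm x t). i \<leftarrow> [0..<Suc m]]"
    using s act_mem[of "x [^]\<^bsub>F2\<^esub> m" "comm x t"] ct x by (simp add: rsum_append)
  finally show ?case .
qed

end

context L begin

definition Ssum :: "letter list \<Rightarrow> letter list \<Rightarrow> nat \<Rightarrow> letter list set" where
  "Ssum x t m = rsum n [act n (t [^]\<^bsub>F2\<^esub> k \<otimes>\<^bsub>F2\<^esub> x [^]\<^bsub>F2\<^esub> i) (comm x t). k \<leftarrow> [0..<m], i \<leftarrow> [0..<m - 1 - k]]"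

lemma Ssum_Suc:
  assumes x: "x \<in> carrier F2" and t: "t \<in> carrier F2" and ct: "\<And>g. g \<in> carrier F2 \<Longrightarrow> comm g t \<in> Rel n"
  shows "Ssum x t (Suc m) = rsum n [act n (x [^]\<^bsub>F2\<^esub> i) (comm x t). i \<leftarrow> [0..<m]] \<otimes>\<^bsub>Rab n\<^esub> actc t (Ssum x t m)"
proof -
  define f where "f k i = act n (t [^]\<^bsub>F2\<^esub> k \<otimes>\<^bsub>F2\<^esub> x [^]\<^bsub>F2\<^esub> i) (comm x t)" for k i :: nat
  have fm: "f k i \<in> carrier (Rab n)" for k i unfolding f_def using act_mem ct x t by simp
  have f0: "f 0 i = act n (x [^]\<^bsub>F2\<^esub> i) (comm x t)" for i unfolding f_def using x by simp
  have f0': "f 0 = (\<lambda>i. act n (x [^]\<^bsub>F2\<^esub> i) (comm x t))" by (rule ext) (rule f0)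
  have fS: "f (Suc k) i = actc t (f k i)" for k i
  proof -
    have "t [^]\<^bsub>F2\<^esub> Suc k \<otimes>\<^bsub>F2\<^esub> x [^]\<^bsub>F2\<^esub> i = t \<otimes>\<^bsub>F2\<^esub> (t [^]\<^bsub>F2\<^esub> k \<otimes>\<^bsub>F2\<^esub> x [^]\<^bsub>F2\<^esub> i)"
      unfolding F.nat_pow_Suc2[OF t] using x t by (simp add: F.m_assoc)
    then show ?thesis unfolding f_def using act_mult_g x t ct by simp
  qed
  have fS': "f (Suc k) = (\<lambda>i. actc t (f k i))" for k by (rule ext) (rule fS)
  have L1: "[f k i. k \<leftarrow> [0..<Suc m], i \<leftarrow> [0..<Suc m - 1 - k]]
     = map (f 0) [0..<m] @ map (actc t) (concat (map (\<lambda>k. map (f k) [0..<m - 1 - k]) [0..<m]))"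

    by (simp add: upt_conv_Cons map_Suc_upt[symmetric] o_def fS' map_concat del: upt_Suc)
  have s1: "set (map (f 0) [0..<m]) \<subseteq> carrier (Rab n)" using fm by auto
  have s2: "set (concat (map (\<lambda>k. map (f k) [0..<m - 1 - k]) [0..<m])) \<subseteq> carrier (Rab n)" using fm by auto
  have s3: "set (map (actc t) (concat (map (\<lambda>k. map (f k) [0..<m - 1 - k]) [0..<m]))) \<subseteq> carrier (Rab n)"
    using s2 actc_mem t by auto
  show ?thesis
    unfolding Ssum_def f_def[symmetric] L1 rsum_append[OF s1 s3]
    using rsum_actc[OF t s2] f0' by simp
qed

lemma W_lemma:
  assumes x: "x \<in> carrier F2" and t: "t \<in> carrier F2" and ct: "\<And>g. g \<in> carrier F2 \<Longrightarrow> comm g t \<in> Rel n"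
  shows "t [^]\<^bsub>F2\<^esub> m \<otimes>\<^bsub>F2\<^esub> (inv\<^bsub>F2\<^esub> t \<otimes>\<^bsub>F2\<^esub> x) [^]\<^bsub>F2\<^esub> m \<otimes>\<^bsub>F2\<^esub> inv\<^bsub>F2\<^esub> (x [^]\<^bsub>F2\<^esub> m) \<in> Rel n
     \<and> cls n (t [^]\<^bsub>F2\<^esub> m \<otimes>\<^bsub>F2\<^esub> (inv\<^bsub>F2\<^esub> t \<otimes>\<^bsub>F2\<^esub> x) [^]\<^bsub>F2\<^esub> m \<otimes>\<^bsub>F2\<^esub> inv\<^bsub>F2\<^esub> (x [^]\<^bsub>F2\<^esub> m))
        = inv\<^bsub>Rab n\<^esub> (Ssum x t m)"
proof (induction m)
  case 0
  have "t [^]\<^bsub>F2\<^esub> (0::nat) \<otimes>\<^bsub>F2\<^esub> (inv\<^bsub>F2\<^esub> t \<otimes>\<^bsub>F2\<^esub> x) [^]\<^bsub>F2\<^esub> (0::nat) \<otimes>\<^bsub>F2\<^esub> inv\<^bsub>F2\<^esub> (x [^]\<^bsub>F2\<^esub> (0::nat)) = \<one>\<^bsub>F2\<^esub>"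
    by simp
  then show ?case by (simp add: one_R cls_one Ssum_def)
next
  case (Suc m)
  define u where "u = inv\<^bsub>F2\<^esub> t"
  have u: "u \<in> carrier F2" using t u_def by simp
  define w where "w = t [^]\<^bsub>F2\<^esub> m \<otimes>\<^bsub>F2\<^esub> (u \<otimes>\<^bsub>F2\<^esub> x) [^]\<^bsub>F2\<^esub> m \<otimes>\<^bsub>F2\<^esub> inv\<^bsub>F2\<^esub> (x [^]\<^bsub>F2\<^esub> m)"
  have wR: "w \<in> Rel n" and wc: "cls n w = inv\<^bsub>Rab n\<^esub> (Ssum x t m)" using Suc unfolding w_def u_def by auto
  define c where "c = comm (x [^]\<^bsub>F2\<^esub> m) u"
  have cR: "c \<in> Rel n" unfolding c_def u_def using comm_inv_R ct x t by simp
  have rec: "t [^]\<^bsub>F2\<^esub> Suc m \<otimes>\<^bsub>F2\<^esub> (u \<otimes>\<^bsub>F2\<^esub> x) [^]\<^bsub>F2\<^esub> Suc m \<otimes>\<^bsub>F2\<^esub> inv\<^bsub>F2\<^esub> (x [^]\<^bsub>F2\<^esub> Suc m)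
      = t \<otimes>\<^bsub>F2\<^esub> (w \<otimes>\<^bsub>F2\<^esub> c) \<otimes>\<^bsub>F2\<^esub> inv\<^bsub>F2\<^esub> t"
    unfolding w_def c_def comm_def u_def F.nat_pow_Suc2[OF t] using x t
    by (simp add: F.m_assoc F.inv_mult_group)
  have ccls: "cls n c = actc (inv\<^bsub>F2\<^esub> t) (inv\<^bsub>Rab n\<^esub> (cls n (comm (x [^]\<^bsub>F2\<^esub> m) t)))"
  proof -
    have "cls n c = act n (inv\<^bsub>F2\<^esub> t) (inv\<^bsub>F2\<^esub> (comm (x [^]\<^bsub>F2\<^esub> m) t))"
      unfolding c_def u_def act_def using comm_inv_t x t by simp
    also have "\<dots> = actc (inv\<^bsub>F2\<^esub> t) (inv\<^bsub>Rab n\<^esub> (cls n (comm (x [^]\<^bsub>F2\<^esub> m) t)))"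
      using act_actc inv_R ct x t cls_inv by simp
    finally show ?thesis .
  qed
  have Cm: "cls n (comm (x [^]\<^bsub>F2\<^esub> m) t) \<in> carrier (Rab n)" using cls_mem ct x by simp
  have Sm: "Ssum x t m \<in> carrier (Rab n)" unfolding Ssum_def
    by (rule rsum_mem) (use act_mem ct x t in auto)
  have tt: "actc t (actc (inv\<^bsub>F2\<^esub> t) V) = V" if "V \<in> carrier (Rab n)" for V
    using actc_comp[of t "inv\<^bsub>F2\<^esub> t" V] that t actc_R[OF one_R] by simp
  have "cls n (t \<otimes>\<^bsub>F2\<^esub> (w \<otimes>\<^bsub>F2\<^esub> c) \<otimes>\<^bsub>F2\<^esub> inv\<^bsub>F2\<^esub> t) = actc t (cls n w \<otimes>\<^bsub>Rab n\<^esub> cls n c)"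
    using actc_cls[OF t mult_R[OF wR cR]] wR cR by (simp add: act_def cls_mult)
  also have "\<dots> = actc t (inv\<^bsub>Rab n\<^esub> (Ssum x t m)) \<otimes>\<^bsub>Rab n\<^esub> inv\<^bsub>Rab n\<^esub> (cls n (comm (x [^]\<^bsub>F2\<^esub> m) t))"
    unfolding wc ccls using actc_mult t Sm Cm actc_mem tt by simp
  also have "\<dots> = inv\<^bsub>Rab n\<^esub> (Ssum x t (Suc m))"
  proof -
    have "Ssum x t (Suc m) = cls n (comm (x [^]\<^bsub>F2\<^esub> m) t) \<otimes>\<^bsub>Rab n\<^esub> actc t (Ssum x t m)"
      using Ssum_Suc[OF x t ct, of m] comm_pow_cls[OF x t ct, of m] by simp
    then show ?thesis
      using actc_inv t Sm Cm actc_mem by (simp add: M.inv_mult M.m_comm)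
  qed
  finally have e2: "cls n (t [^]\<^bsub>F2\<^esub> Suc m \<otimes>\<^bsub>F2\<^esub> (u \<otimes>\<^bsub>F2\<^esub> x) [^]\<^bsub>F2\<^esub> Suc m \<otimes>\<^bsub>F2\<^esub> inv\<^bsub>F2\<^esub> (x [^]\<^bsub>F2\<^esub> Suc m))
     = inv\<^bsub>Rab n\<^esub> (Ssum x t (Suc m))" unfolding rec .
  have e1: "t [^]\<^bsub>F2\<^esub> Suc m \<otimes>\<^bsub>F2\<^esub> (u \<otimes>\<^bsub>F2\<^esub> x) [^]\<^bsub>F2\<^esub> Suc m \<otimes>\<^bsub>F2\<^esub> inv\<^bsub>F2\<^esub> (x [^]\<^bsub>F2\<^esub> Suc m) \<in> Rel n"
    unfolding rec using conj_R t mult_R wR cR by simp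
  show ?case using e1 e2 unfolding u_def by simp
qed

end

context L begin

lemma list_trim: "[g k i. k \<leftarrow> [0..<N], i \<leftarrow> [0..<N - 1 - k]] = [g k i. k \<leftarrow> [0..<N - 1], i \<leftarrow> [0..<N - 1 - k]]"
  by (cases N) auto

lemma ident1:
  assumes x: "x \<in> carrier F2" and y: "y \<in> carrier F2" and tdef: "t = comm x y"
    and ct: "\<And>g. g \<in> carrier F2 \<Longrightarrow> comm g t \<in> Rel n"
    and xN: "x [^]\<^bsub>F2\<^esub> (N::nat) \<in> Rel n" and tN: "t [^]\<^bsub>F2\<^esub> N \<in> Rel n"
  shows "cls n (t [^]\<^bsub>F2\<^esub> N) = cls n (x [^]\<^bsub>F2\<^esub> N)
        \<otimes>\<^bsub>Rab n\<^esub> inv\<^bsub>Rab n\<^esub> (act n y (x [^]\<^bsub>F2\<^esub> N))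
        \<otimes>\<^bsub>Rab n\<^esub> inv\<^bsub>Rab n\<^esub> (rsum n [act n (t [^]\<^bsub>F2\<^esub> k \<otimes>\<^bsub>F2\<^esub> x [^]\<^bsub>F2\<^esub> i) (comm x t).
                                      k \<leftarrow> [0..<N - 1], i \<leftarrow> [0..<N - 1 - k]])"
proof -
  have t: "t \<in> carrier F2" using tdef x y comm_car by simp
  define u where "u = inv\<^bsub>F2\<^esub> t"
  have u: "u \<in> carrier F2" using t u_def by simp
  have yx: "y \<otimes>\<^bsub>F2\<^esub> x \<otimes>\<^bsub>F2\<^esub> inv\<^bsub>F2\<^esub> y = u \<otimes>\<^bsub>F2\<^esub> x"
    unfolding u_def tdef comm_def using x y by (simp add: F.m_assoc F.inv_mult_group)
  have conj: "y \<otimes>\<^bsub>F2\<^esub> x [^]\<^bsub>F2\<^esub> N \<otimes>\<^bsub>F2\<^esub> inv\<^bsub>F2\<^esub> y = (u \<otimes>\<^bsub>F2\<^esub> x) [^]\<^bsub>F2\<^esub> N"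
    using F.conj_pow[OF y x, of N] yx by simp
  define W where "W = t [^]\<^bsub>F2\<^esub> N \<otimes>\<^bsub>F2\<^esub> (u \<otimes>\<^bsub>F2\<^esub> x) [^]\<^bsub>F2\<^esub> N \<otimes>\<^bsub>F2\<^esub> inv\<^bsub>F2\<^esub> (x [^]\<^bsub>F2\<^esub> N)"
  have WR: "W \<in> Rel n" and Wc: "cls n W = inv\<^bsub>Rab n\<^esub> (Ssum x t N)"
    using W_lemma[OF x t ct, of N] unfolding W_def u_def by auto
  have ux: "(u \<otimes>\<^bsub>F2\<^esub> x) [^]\<^bsub>F2\<^esub> N = inv\<^bsub>F2\<^esub> (t [^]\<^bsub>F2\<^esub> N) \<otimes>\<^bsub>F2\<^esub> W \<otimes>\<^bsub>F2\<^esub> x [^]\<^bsub>F2\<^esub> N"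
    unfolding W_def using x t u by (simp add: F.m_assoc)
  have Sm: "Ssum x t N \<in> carrier (Rab n)" unfolding Ssum_def
    by (rule rsum_mem) (use act_mem ct x t in auto)
  have "act n y (x [^]\<^bsub>F2\<^esub> N) = cls n (inv\<^bsub>F2\<^esub> (t [^]\<^bsub>F2\<^esub> N) \<otimes>\<^bsub>F2\<^esub> W \<otimes>\<^bsub>F2\<^esub> x [^]\<^bsub>F2\<^esub> N)"
    unfolding act_def conj ux ..
  also have "\<dots> = inv\<^bsub>Rab n\<^esub> (cls n (t [^]\<^bsub>F2\<^esub> N)) \<otimes>\<^bsub>Rab n\<^esub> inv\<^bsub>Rab n\<^esub> (Ssum x t N) \<otimes>\<^bsub>Rab n\<^esub> cls n (x [^]\<^bsub>F2\<^esub> N)"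
    using tN WR xN by (simp add: cls_mult[symmetric] inv_R mult_R cls_inv Wc)
  finally have A: "act n y (x [^]\<^bsub>F2\<^esub> N) = inv\<^bsub>Rab n\<^esub> (cls n (t [^]\<^bsub>F2\<^esub> N)) \<otimes>\<^bsub>Rab n\<^esub> inv\<^bsub>Rab n\<^esub> (Ssum x t N) \<otimes>\<^bsub>Rab n\<^esub> cls n (x [^]\<^bsub>F2\<^esub> N)" .
  have B: "rsum n [act n (t [^]\<^bsub>F2\<^esub> k \<otimes>\<^bsub>F2\<^esub> x [^]\<^bsub>F2\<^esub> i) (comm x t). k \<leftarrow> [0..<N - 1], i \<leftarrow> [0..<N - 1 - k]] = Ssum x t N"
    unfolding Ssum_def list_trim ..
  show ?thesis unfolding A B
    using M.cancel3[OF cls_mem[OF tN] Sm cls_mem[OF xN]] by simp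
qed

lemma ident3:
  assumes x: "x \<in> carrier F2" and y: "y \<in> carrier F2" and t: "t \<in> carrier F2"
    and ct: "\<And>g. g \<in> carrier F2 \<Longrightarrow> comm g t \<in> Rel n"
  shows "cls n (comm (x [^]\<^bsub>F2\<^esub> (i::nat) \<otimes>\<^bsub>F2\<^esub> y [^]\<^bsub>F2\<^esub> (j::nat)) t) =
        rsum n [act n (x [^]\<^bsub>F2\<^esub> i \<otimes>\<^bsub>F2\<^esub> y [^]\<^bsub>F2\<^esub> l) (comm y t). l \<leftarrow> [0..<j]]
        \<otimes>\<^bsub>Rab n\<^esub> rsum n [act n (x [^]\<^bsub>F2\<^esub> l) (comm x t). l \<leftarrow> [0..<i]]"
proof -
  define a where "a = x [^]\<^bsub>F2\<^esub> i"
  define b where "b = y [^]\<^bsub>F2\<^esub> j"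
  have a: "a \<in> carrier F2" and b: "b \<in> carrier F2" using x y a_def b_def by auto
  have e: "comm (a \<otimes>\<^bsub>F2\<^esub> b) t = (a \<otimes>\<^bsub>F2\<^esub> comm b t \<otimes>\<^bsub>F2\<^esub> inv\<^bsub>F2\<^esub> a) \<otimes>\<^bsub>F2\<^esub> comm a t"
    unfolding comm_def using a b t by (simp add: F.m_assoc F.inv_mult_group)
  have s: "set [act n (y [^]\<^bsub>F2\<^esub> l) (comm y t). l \<leftarrow> [0..<j]] \<subseteq> carrier (Rab n)"
    using act_mem ct y by auto
  have "cls n (comm (a \<otimes>\<^bsub>F2\<^esub> b) t) = act n a (comm b t) \<otimes>\<^bsub>Rab n\<^esub> cls n (comm a t)"
    unfolding e using ct a b conj_R by (simp add: cls_mult act_def)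
  also have "act n a (comm b t) = actc a (rsum n [act n (y [^]\<^bsub>F2\<^esub> l) (comm y t). l \<leftarrow> [0..<j]])"
    using act_actc[OF a ct[OF b]] comm_pow_cls[OF y t ct, of j] unfolding b_def by simp
  also have "\<dots> = rsum n [act n (a \<otimes>\<^bsub>F2\<^esub> y [^]\<^bsub>F2\<^esub> l) (comm y t). l \<leftarrow> [0..<j]]"
    using rsum_actc[OF a s] act_mult_g[OF a] ct y by (simp add: o_def)
  finally show ?thesis unfolding a_def b_def using comm_pow_cls[OF x t ct, of i] by simp
qed

end

lemma (in group) central_comm: "g \<in> carrier G \<Longrightarrow> c \<in> carrier G \<Longrightarrow> g \<otimes> c = c \<otimes> g \<Longrightarrow> g \<otimes> c \<otimes> inv g \<otimes> inv c = \<one>"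
  by (simp add: m_assoc)

context L begin

sublocale Hn: group "Heis n" by (rule group_Heis[OF npos])

lemma hh: "group_hom F2 (Heis n) (hval n)" by (rule group_hom_hval[OF npos])

lemma one_mod[simp]: "1 mod n = 1" using n2 by simp
lemma mone_mod[simp]: "(-1) mod n = n - 1"
  by (simp add: zmod_zminus1_eq_if)

lemma a_car: "gen_a \<in> carrier F2" by (simp add: gen_a_def F2_carrier)
lemma b_car: "gen_b \<in> carrier F2" by (simp add: gen_b_def F2_carrier)
lemma T_car: "gen_T \<in> carrier F2" by (simp add: gen_T_def comm_car a_car b_car)

lemma ha: "hval n gen_a = (1, 0, 0)" by (simp add: gen_a_def letter_val_def)
lemma hb: "hval n gen_b = (0, 1, 0)" by (simp add: gen_b_def letter_val_def)

lemma inv_ha: "inv\<^bsub>Heis n\<^esub> (1, 0, 0) = (n - 1, 0, 0)"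
  by (rule Hn.inv_equality) (use n2 in \<open>auto simp: Heis_one\<close>)
lemma inv_hb: "inv\<^bsub>Heis n\<^esub> (0, 1, 0) = (0, n - 1, 0)"
  by (rule Hn.inv_equality) (use n2 in \<open>auto simp: Heis_one\<close>)

lemma hT: "hval n gen_T = (0, 0, 1)"
proof -
  have "hval n gen_T = hval n gen_a \<otimes>\<^bsub>Heis n\<^esub> hval n gen_b \<otimes>\<^bsub>Heis n\<^esub> inv\<^bsub>Heis n\<^esub> hval n gen_a \<otimes>\<^bsub>Heis n\<^esub> inv\<^bsub>Heis n\<^esub> hval n gen_b"
    unfolding gen_T_def comm_def using a_car b_car
    by (simp add: group_hom.hom_mult[OF hh] group_hom.hom_inv[OF hh])
  also have "\<dots> = (0, 0, 1)" unfolding ha hb inv_ha inv_hb using n2 by simp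
  finally show ?thesis .
qed

lemma powT: "(0, 0, 1) [^]\<^bsub>Heis n\<^esub> (k::nat) = (0, 0, int k mod n)"
  by (induction k) (auto simp: Heis_one mod_add_right_eq add.commute)
lemma powa: "(1, 0, 0) [^]\<^bsub>Heis n\<^esub> (k::nat) = (int k mod n, 0, 0)"
  by (induction k) (auto simp: Heis_one mod_add_right_eq add.commute)
lemma powb: "(0, 1, 0) [^]\<^bsub>Heis n\<^esub> (k::nat) = (0, int k mod n, 0)"
  by (induction k) (auto simp: Heis_one mod_add_right_eq add.commute)

lemma inR: "x \<in> carrier F2 \<Longrightarrow> hval n x = (0, 0, 0) \<Longrightarrow> x \<in> Rel n"
  by (simp add: Rel_def kernel_def Heis_one)

lemma aN: "gen_a [^]\<^bsub>F2\<^esub> (nat n) \<in> Rel n"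
  using a_car n2 by (intro inR) (simp_all add: group_hom.hom_nat_pow[OF hh] ha powa del: pow_nat)
lemma bN: "gen_b [^]\<^bsub>F2\<^esub> (nat n) \<in> Rel n"
  using b_car n2 by (intro inR) (simp_all add: group_hom.hom_nat_pow[OF hh] hb powb del: pow_nat)
lemma TN: "gen_T [^]\<^bsub>F2\<^esub> (nat n) \<in> Rel n"
  using T_car n2 by (intro inR) (simp_all add: group_hom.hom_nat_pow[OF hh] hT powT del: pow_nat)

lemma central: "h \<in> carrier (Heis n) \<Longrightarrow> h \<otimes>\<^bsub>Heis n\<^esub> (0, 0, 1) = (0, 0, 1) \<otimes>\<^bsub>Heis n\<^esub> h"
  by (cases h) (simp add: algebra_simps)

lemma ctT: "g \<in> carrier F2 \<Longrightarrow> comm g gen_T \<in> Rel n"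
proof -
  assume g: "g \<in> carrier F2"
  have hg: "hval n g \<in> carrier (Heis n)" using hval_mem npos by blast
  have c: "(0, 0, 1) \<in> carrier (Heis n)" using n2 by simp
  have "hval n (comm g gen_T) = hval n g \<otimes>\<^bsub>Heis n\<^esub> (0, 0, 1) \<otimes>\<^bsub>Heis n\<^esub> inv\<^bsub>Heis n\<^esub> hval n g \<otimes>\<^bsub>Heis n\<^esub> inv\<^bsub>Heis n\<^esub> (0, 0, 1)"
    unfolding comm_def using g T_car
    by (simp add: group_hom.hom_mult[OF hh] group_hom.hom_inv[OF hh] hT)
  also have "\<dots> = (0, 0, 0)" using Hn.central_comm[OF hg c central[OF hg]] by (simp add: Heis_one)
  finally show ?thesis using g T_car by (intro inR) (simp_all add: comm_car)
qed

lemma inv_T: "inv\<^bsub>F2\<^esub> gen_T = comm gen_b gen_a"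
  unfolding gen_T_def comm_def using a_car b_car by (simp add: F.m_assoc F.inv_mult_group)

end

context L begin

lemma main:
  shows "fpow gen_T n \<in> Rel n
    \<and> (\<forall>i j :: nat. fpow gen_T (-n) \<otimes>\<^bsub>F2\<^esub> comm (fpow gen_a (int i) \<otimes>\<^bsub>F2\<^esub> fpow gen_b (int j)) gen_T \<in> Rel n)
    \<and> cls n (fpow gen_T n) =
        cls n (fpow gen_a n)
        \<otimes>\<^bsub>Rab n\<^esub> inv\<^bsub>Rab n\<^esub> (act n gen_b (fpow gen_a n))
        \<otimes>\<^bsub>Rab n\<^esub> inv\<^bsub>Rab n\<^esub> (rsum n [act n (fpow gen_T (int k) \<otimes>\<^bsub>F2\<^esub> fpow gen_a (int i)) (comm gen_a gen_T).
                                      k \<leftarrow> [0..<nat n - 1], i \<leftarrow> [0..<nat n - 1 - k]])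
    \<and> cls n (fpow gen_T (-n)) =
        cls n (fpow gen_b n)
        \<otimes>\<^bsub>Rab n\<^esub> inv\<^bsub>Rab n\<^esub> (act n gen_a (fpow gen_b n))
        \<otimes>\<^bsub>Rab n\<^esub> inv\<^bsub>Rab n\<^esub> (rsum n [act n (fpow gen_T (- int k) \<otimes>\<^bsub>F2\<^esub> fpow gen_b (int j)) (comm gen_b (fpow gen_T (-1))).
                                      k \<leftarrow> [0..<nat n - 1], j \<leftarrow> [0..<nat n - 1 - k]])
    \<and> (\<forall>i j :: nat. cls n (comm (fpow gen_a (int i) \<otimes>\<^bsub>F2\<^esub> fpow gen_b (int j)) gen_T) =
        rsum n [act n (fpow gen_a (int i) \<otimes>\<^bsub>F2\<^esub> fpow gen_b (int l)) (comm gen_b gen_T). l \<leftarrow> [0..<j]]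
        \<otimes>\<^bsub>Rab n\<^esub> rsum n [act n (fpow gen_a (int l)) (comm gen_a gen_T). l \<leftarrow> [0..<i]])"
proof -
  define N where "N = nat n"
  have nN: "n = int N" unfolding N_def using n2 by simp
  have e1: "fpow x n = x [^]\<^bsub>F2\<^esub> N" for x unfolding nN by (rule int_pow_int)
  have e4: "fpow gen_T (-n) = (inv\<^bsub>F2\<^esub> gen_T) [^]\<^bsub>F2\<^esub> N"
    unfolding nN using T_car by (simp add: F.int_pow_neg_int F.nat_pow_inv)
  have e5: "fpow gen_T (- int k) = (inv\<^bsub>F2\<^esub> gen_T) [^]\<^bsub>F2\<^esub> k" for k
    using T_car by (simp add: F.int_pow_neg_int F.nat_pow_inv)
  have e6: "fpow gen_T (-1) = inv\<^bsub>F2\<^esub> gen_T" using T_car by (simp add: F.int_pow_neg)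
  have e7: "fpow x (int k) = x [^]\<^bsub>F2\<^esub> k" for x k by (rule int_pow_int)
  have iT: "inv\<^bsub>F2\<^esub> gen_T \<in> carrier F2" using T_car by simp
  have ctI: "comm g (inv\<^bsub>F2\<^esub> gen_T) \<in> Rel n" if "g \<in> carrier F2" for g
    using comm_inv_R[OF that T_car ctT[OF that]] .
  have iTN: "(inv\<^bsub>F2\<^esub> gen_T) [^]\<^bsub>F2\<^esub> N \<in> Rel n"
    using inv_R[OF TN] T_car unfolding N_def by (simp add: F.nat_pow_inv)
  have P1: "gen_T [^]\<^bsub>F2\<^esub> N \<in> Rel n" using TN unfolding N_def .
  have P2: "(inv\<^bsub>F2\<^esub> gen_T) [^]\<^bsub>F2\<^esub> N \<otimes>\<^bsub>F2\<^esub> comm (gen_a [^]\<^bsub>F2\<^esub> i \<otimes>\<^bsub>F2\<^esub> gen_b [^]\<^bsub>F2\<^esub> j) gen_T \<in> Rel n"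
    for i j :: nat
    using mult_R[OF iTN ctT] a_car b_car by simp
  have P3: "cls n (gen_T [^]\<^bsub>F2\<^esub> N) = cls n (gen_a [^]\<^bsub>F2\<^esub> N)
        \<otimes>\<^bsub>Rab n\<^esub> inv\<^bsub>Rab n\<^esub> (act n gen_b (gen_a [^]\<^bsub>F2\<^esub> N))
        \<otimes>\<^bsub>Rab n\<^esub> inv\<^bsub>Rab n\<^esub> (rsum n [act n (gen_T [^]\<^bsub>F2\<^esub> k \<otimes>\<^bsub>F2\<^esub> gen_a [^]\<^bsub>F2\<^esub> i) (comm gen_a gen_T).
                                      k \<leftarrow> [0..<N - 1], i \<leftarrow> [0..<N - 1 - k]])"
    by (rule ident1[OF a_car b_car gen_T_def ctT]) (use aN TN in \<open>simp_all add: N_def\<close>)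
  have P4: "cls n ((inv\<^bsub>F2\<^esub> gen_T) [^]\<^bsub>F2\<^esub> N) = cls n (gen_b [^]\<^bsub>F2\<^esub> N)
        \<otimes>\<^bsub>Rab n\<^esub> inv\<^bsub>Rab n\<^esub> (act n gen_a (gen_b [^]\<^bsub>F2\<^esub> N))
        \<otimes>\<^bsub>Rab n\<^esub> inv\<^bsub>Rab n\<^esub> (rsum n [act n ((inv\<^bsub>F2\<^esub> gen_T) [^]\<^bsub>F2\<^esub> k \<otimes>\<^bsub>F2\<^esub> gen_b [^]\<^bsub>F2\<^esub> i) (comm gen_b (inv\<^bsub>F2\<^esub> gen_T)).
                                      k \<leftarrow> [0..<N - 1], i \<leftarrow> [0..<N - 1 - k]])"
    by (rule ident1[OF b_car a_car inv_T ctI]) (use bN iTN in \<open>simp_all add: N_def\<close>)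
  have P5: "cls n (comm (gen_a [^]\<^bsub>F2\<^esub> i \<otimes>\<^bsub>F2\<^esub> gen_b [^]\<^bsub>F2\<^esub> j) gen_T) =
        rsum n [act n (gen_a [^]\<^bsub>F2\<^esub> i \<otimes>\<^bsub>F2\<^esub> gen_b [^]\<^bsub>F2\<^esub> l) (comm gen_b gen_T). l \<leftarrow> [0..<j]]
        \<otimes>\<^bsub>Rab n\<^esub> rsum n [act n (gen_a [^]\<^bsub>F2\<^esub> l) (comm gen_a gen_T). l \<leftarrow> [0..<i]]" for i j :: nat
    by (rule ident3[OF a_car b_car T_car ctT])
  show ?thesis
    unfolding e1 e4 e5 e6 e7 N_def[symmetric]
    using P1 P2 P3 P4 P5 by blast
qed

end

theorem lemma2p11:
  fixes n :: int
  assumes "n \<ge> 2"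
  shows "fpow gen_T n \<in> Rel n
    \<and> (\<forall>i j :: nat. fpow gen_T (-n) \<otimes>\<^bsub>F2\<^esub> comm (fpow gen_a (int i) \<otimes>\<^bsub>F2\<^esub> fpow gen_b (int j)) gen_T \<in> Rel n)
    \<and> cls n (fpow gen_T n) =
        cls n (fpow gen_a n)
        \<otimes>\<^bsub>Rab n\<^esub> inv\<^bsub>Rab n\<^esub> (act n gen_b (fpow gen_a n))
        \<otimes>\<^bsub>Rab n\<^esub> inv\<^bsub>Rab n\<^esub> (rsum n [act n (fpow gen_T (int k) \<otimes>\<^bsub>F2\<^esub> fpow gen_a (int i)) (comm gen_a gen_T).
                                      k \<leftarrow> [0..<nat n - 1], i \<leftarrow> [0..<nat n - 1 - k]])
    \<and> cls n (fpow gen_T (-n)) =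
        cls n (fpow gen_b n)
        \<otimes>\<^bsub>Rab n\<^esub> inv\<^bsub>Rab n\<^esub> (act n gen_a (fpow gen_b n))
        \<otimes>\<^bsub>Rab n\<^esub> inv\<^bsub>Rab n\<^esub> (rsum n [act n (fpow gen_T (- int k) \<otimes>\<^bsub>F2\<^esub> fpow gen_b (int j)) (comm gen_b (fpow gen_T (-1))).
                                      k \<leftarrow> [0..<nat n - 1], j \<leftarrow> [0..<nat n - 1 - k]])
    \<and> (\<forall>i j :: nat. cls n (comm (fpow gen_a (int i) \<otimes>\<^bsub>F2\<^esub> fpow gen_b (int j)) gen_T) =
        rsum n [act n (fpow gen_a (int i) \<otimes>\<^bsub>F2\<^esub> fpow gen_b (int l)) (comm gen_b gen_T). l \<leftarrow> [0..<j]]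
        \<otimes>\<^bsub>Rab n\<^esub> rsum n [act n (fpow gen_a (int l)) (comm gen_a gen_T). l \<leftarrow> [0..<i]])"
proof -
  interpret L n using assms by unfold_locales
  show ?thesis by (rule main)
qed


end
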